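(* For all integers $k\ge n\ge1$, the transition matrix $\bar K$ of the Burnside process on $\Pi_n$ satisfies $$\bar K(x,y)\ge\frac{1}{(n+1)^{n-1}}\quad\text{for all }x,y\in\Pi_n.$$
   Context: $S_k$ acts on $[k]^n$ by $\sigma(u_1,\dots,u_n)=(\sigma(u_1),\dots,\sigma(u_n))$. The Burnside process on $[k]^n$: from $u$, choose $\sigma$ uniformly among permutations of $[k]$ fixing every value appearing in $u$, then choose each coordinate of the new state independently and uniformly among the fixed points of $\sigma$. $\Pi_n$ is the set of set partitions of $[n]$; the partition of $u$ puts $i,j$ in the same block iff $u_i=u_j$, and the orbits of the action are the sets of vectors with a given partition. The Burnside process on $\Pi_n$ is the lumped chain: $\bar K(x,y)$ is the probability that one step of the Burnside process on $[k]^n$ started from any $u$ with partition $x$ lands on a vector with partition $y$. *)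

theory Defs
  imports Complex_Main "HOL-Library.Disjoint_Sets" "HOL-Library.FuncSet" "HOL-Combinatorics.Permutations"
begin

text \<open>[n] is modelled as {0..<n}, [k] as {0..<k}. Vectors in [k]^n are extensional
functions from {0..<n} to {0..<k} (PiE).\<close>

definition vecs :: "nat \<Rightarrow> nat \<Rightarrow> (nat \<Rightarrow> nat) set" where
  "vecs k n = {0..<n} \<rightarrow>\<^sub>E {0..<k}"

definition setparts :: "nat \<Rightarrow> nat set set set" where
  "setparts n = {P. partition_on {0..<n} P}"

definition part_of :: "nat \<Rightarrow> (nat \<Rightarrow> nat) \<Rightarrow> nat set set" where
  "part_of n u = (\<lambda>i. {j \<in> {0..<n}. u j = u i}) ` {0..<n}"

definition stab :: "nat \<Rightarrow> nat \<Rightarrow> (nat \<Rightarrow> nat) \<Rightarrow> (nat \<Rightarrow> nat) set" where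
  "stab k n u = {\<sigma>. \<sigma> permutes {0..<k} \<and> (\<forall>i\<in>{0..<n}. \<sigma> (u i) = u i)}"

definition fixpts :: "nat \<Rightarrow> (nat \<Rightarrow> nat) \<Rightarrow> nat set" where
  "fixpts k \<sigma> = {a \<in> {0..<k}. \<sigma> a = a}"

text \<open>One step of the Burnside process on [k]^n: choose \<sigma> uniformly in stab,
 then each coordinate independently uniform in the fixed points of \<sigma>.\<close>
definition burnside_K :: "nat \<Rightarrow> nat \<Rightarrow> (nat \<Rightarrow> nat) \<Rightarrow> (nat \<Rightarrow> nat) \<Rightarrow> real" where
  "burnside_K k n u w =
     (\<Sum>\<sigma>\<in>stab k n u. (1 / real (card (stab k n u))) *
        (\<Prod>i\<in>{0..<n}. (if w i \<in> fixpts k \<sigma> then 1 / real (card (fixpts k \<sigma>)) else 0)))"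

text \<open>Lumped chain on set partitions, started from (any, here a chosen) vector with partition x.\<close>
definition burnside_Kbar :: "nat \<Rightarrow> nat \<Rightarrow> nat set set \<Rightarrow> nat set set \<Rightarrow> real" where
  "burnside_Kbar k n x y =
     (let u = (SOME u. u \<in> vecs k n \<and> part_of n u = x)
      in \<Sum>w\<in>{w \<in> vecs k n. part_of n w = y}. burnside_K k n u w)"

end

theory Submission
  imports Defs
begin



lemma perm_fix_eq:
  assumes "B \<subseteq> A"
  shows "{\<sigma>. \<sigma> permutes A \<and> (\<forall>b\<in>B. \<sigma> b = b)} = {\<sigma>. \<sigma> permutes (A - B)}"
proof (intro set_eqI iffI; simp)
  fix \<sigma> assume h: "\<sigma> permutes A \<and> (\<forall>b\<in>B. \<sigma> b = b)"
  then show "\<sigma> permutes (A - B)"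
    unfolding permutes_def by blast
next
  fix \<sigma> assume h: "\<sigma> permutes (A - B)"
  show "\<sigma> permutes A \<and> (\<forall>b\<in>B. \<sigma> b = b)"
    using h permutes_subset[of \<sigma> "A - B" A] permutes_not_in[OF h] by auto
qed

lemma fixsum:
  assumes "finite A" "S \<subseteq> A"
  shows "(\<Sum>\<sigma>\<in>{\<sigma>. \<sigma> permutes S}. card {a\<in>A. \<sigma> a = a}) \<le> (card A - card S + 1) * fact (card S)"
proof -
  have fS: "finite S" using assms finite_subset by blast
  have fP: "finite {\<sigma>. \<sigma> permutes S}" using fS finite_permutations by blast
  have "(\<Sum>\<sigma>\<in>{\<sigma>. \<sigma> permutes S}. card {a\<in>A. \<sigma> a = a})
      = (\<Sum>\<sigma>\<in>{\<sigma>. \<sigma> permutes S}. \<Sum>a\<in>A. if \<sigma> a = a then 1 else (0::nat))"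
    using assms(1) by (simp add: sum.If_cases) (simp add: Int_def)
  also have "\<dots> = (\<Sum>a\<in>A. \<Sum>\<sigma>\<in>{\<sigma>. \<sigma> permutes S}. if \<sigma> a = a then 1 else (0::nat))"
    by (rule sum.swap)
  also have "\<dots> = (\<Sum>a\<in>A. card {\<sigma>. \<sigma> permutes S \<and> \<sigma> a = a})"
    using fP by (simp add: sum.If_cases Int_def conj_commute)
  also have "\<dots> = (\<Sum>a\<in>A - S. card {\<sigma>. \<sigma> permutes S \<and> \<sigma> a = a}) + (\<Sum>a\<in>S. card {\<sigma>. \<sigma> permutes S \<and> \<sigma> a = a})"
    using assms by (metis (no_types, lifting) Diff_partition sum.subset_diff)
  also have "(\<Sum>a\<in>A - S. card {\<sigma>. \<sigma> permutes S \<and> \<sigma> a = a}) = (\<Sum>a\<in>A - S. fact (card S))"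
  proof (rule sum.cong[OF refl])
    fix a assume "a \<in> A - S"
    then have "{\<sigma>. \<sigma> permutes S \<and> \<sigma> a = a} = {\<sigma>. \<sigma> permutes S}"
      using permutes_not_in by fastforce
    then show "card {\<sigma>. \<sigma> permutes S \<and> \<sigma> a = a} = fact (card S)"
      using card_permutations[OF refl fS] by simp
  qed
  also have "(\<Sum>a\<in>S. card {\<sigma>. \<sigma> permutes S \<and> \<sigma> a = a}) = (\<Sum>a\<in>S. fact (card S - 1))"
  proof (rule sum.cong[OF refl])
    fix a assume a: "a \<in> S"
    have "{\<sigma>. \<sigma> permutes S \<and> \<sigma> a = a} = {\<sigma>. \<sigma> permutes (S - {a})}"
      using perm_fix_eq[of "{a}" S] a by auto
    then show "card {\<sigma>. \<sigma> permutes S \<and> \<sigma> a = a} = fact (card S - 1)"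
      using card_permutations[OF refl, of "S - {a}"] fS a by simp
  qed
  also have "(\<Sum>a\<in>A - S. fact (card S)) + (\<Sum>a\<in>S. fact (card S - 1)) = (card A - card S) * fact (card S) + card S * fact (card S - 1)"
    using assms fS by (simp add: card_Diff_subset)
  also have "card S * fact (card S - 1) \<le> fact (card S)"
    by (cases "card S") auto
  finally show ?thesis by (simp add: algebra_simps)
qed

lemma tangent:
  fixes x a :: real
  assumes "x > 0" "a > 0"
  shows "(1 + real p - real p * x / a) / a ^ p \<le> 1 / x ^ p"
proof -
  define t where "t = a / x"
  have t: "t > 0" using assms by (simp add: t_def)
  have "1 + real p * (t - 1) \<le> (1 + (t - 1)) ^ p"
    by (rule Bernoulli_inequality) (use t in simp)
  then have b: "1 + real p * (t - 1) \<le> t ^ p" by simp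
  have "x / a = 1 / t" using assms by (simp add: t_def)
  moreover have "t - 1 \<ge> 1 - 1 / t"
  proof -
    have "(t - 1)^2 \<ge> 0" by simp
    then have "t * t - 2 * t + 1 \<ge> 0" by (simp add: power2_eq_square algebra_simps)
    then have "t * (t - 1) \<ge> t * (1 - 1/t)" using t by (simp add: algebra_simps)
    then show ?thesis using t by (simp add: mult_le_cancel_left_pos)
  qed
  ultimately have "1 + real p - real p * x / a = 1 + real p * (1 - 1/t)" and
     "real p * (1 - 1/t) \<le> real p * (t - 1)"
    by (metis (no_types) add_diff_eq right_diff_distrib mult.right_neutral times_divide_eq_right,
        intro mult_left_mono, simp_all)
  then have "1 + real p - real p * x / a \<le> t ^ p"
    using b by linarith
  also have "t ^ p = a ^ p / x ^ p" by (simp add: t_def power_divide)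
  finally have "1 + real p - real p * x / a \<le> a ^ p / x ^ p" .
  then show ?thesis using assms by (simp add: divide_simps mult.commute)
qed

lemma jensen_inv:
  fixes x :: "'i \<Rightarrow> real"
  assumes "finite I" "\<And>i. i \<in> I \<Longrightarrow> x i > 0" "sum x I \<le> real (card I) * a" "a > 0"
  shows "real (card I) / a ^ p \<le> (\<Sum>i\<in>I. 1 / x i ^ p)"
proof -
  have "(\<Sum>i\<in>I. (1 + real p - real p * x i / a) / a ^ p) \<le> (\<Sum>i\<in>I. 1 / x i ^ p)"
    using tangent assms by (intro sum_mono) auto
  moreover have "(\<Sum>i\<in>I. (1 + real p - real p * x i / a) / a ^ p)
      = (real (card I) * (1 + real p) - real p * sum x I / a) / a ^ p"
    by (simp add: sum_divide_distrib[symmetric] sum_subtractf sum_distrib_left[symmetric] sum_divide_distrib algebra_simps)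
  moreover have "real (card I) * (1 + real p) - real p * sum x I / a \<ge> real (card I)"
  proof -
    have "sum x I / a \<le> real (card I)" using assms by (simp add: divide_simps)
    then have "real p * (sum x I / a) \<le> real p * real (card I)" by (rule mult_left_mono) simp
    then show ?thesis by (simp add: algebra_simps)
  qed
  ultimately show ?thesis using assms(4)
    by (smt (verit) divide_right_mono zero_le_power)
qed



definition blk :: "'a set set \<Rightarrow> 'a \<Rightarrow> 'a set" where
  "blk P i = (THE X. X \<in> P \<and> i \<in> X)"

lemma blk_eq:
  assumes "partition_on I P" "X \<in> P" "i \<in> X"
  shows "blk P i = X"
  unfolding blk_def
proof (rule the_equality)
  show "X \<in> P \<and> i \<in> X" using assms by blast
  fix Y assume "Y \<in> P \<and> i \<in> Y"
  then show "Y = X" using assms partition_onD2[OF assms(1)] unfolding disjoint_def by blast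
qed

lemma blk_mem:
  assumes "partition_on I P" "i \<in> I"
  shows "blk P i \<in> P" "i \<in> blk P i"
proof -
  obtain X where "X \<in> P" "i \<in> X" using partition_onD1[OF assms(1)] assms(2) by blast
  then show "blk P i \<in> P" "i \<in> blk P i" using blk_eq[OF assms(1)] by auto
qed

lemma card_part_le:
  assumes "partition_on I P" "finite I"
  shows "card P \<le> card I"
proof -
  have "P = blk P ` I"
  proof
    show "P \<subseteq> blk P ` I"
    proof
      fix X assume X: "X \<in> P"
      then obtain i where "i \<in> X" using partition_onD3[OF assms(1)] by (metis all_not_in_conv)
      then show "X \<in> blk P ` I" using X blk_eq[OF assms(1) X] partition_onD1[OF assms(1)] by blast
    qed
    show "blk P ` I \<subseteq> P" using blk_mem[OF assms(1)] by blast
  qed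
  then show ?thesis using card_image_le[OF assms(2)] by metis
qed

definition mkw :: "nat \<Rightarrow> nat set set \<Rightarrow> (nat set \<Rightarrow> nat) \<Rightarrow> nat \<Rightarrow> nat" where
  "mkw n P g = restrict (\<lambda>i. g (blk P i)) {0..<n}"

lemma mkw_props:
  assumes P: "partition_on {0..<n} P" and g: "g \<in> P \<rightarrow>\<^sub>E F" "inj_on g P" and F: "F \<subseteq> {0..<k}"
  shows "mkw n P g \<in> vecs k n" "part_of n (mkw n P g) = P" "\<forall>i\<in>{0..<n}. mkw n P g i \<in> F"
proof -
  show "\<forall>i\<in>{0..<n}. mkw n P g i \<in> F"
    using blk_mem[OF P] g(1) by (auto simp: mkw_def)
  then show "mkw n P g \<in> vecs k n" using F by (auto simp: vecs_def mkw_def)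
  have e: "{j \<in> {0..<n}. mkw n P g j = mkw n P g i} = blk P i" if i: "i \<in> {0..<n}" for i
  proof -
    have "{j \<in> {0..<n}. mkw n P g j = mkw n P g i} = {j \<in> {0..<n}. blk P j = blk P i}"
      using i blk_mem[OF P] inj_onD[OF g(2)] by (auto simp: mkw_def) metis+
    also have "\<dots> = blk P i"
    proof (intro set_eqI iffI)
      fix j assume "j \<in> {j \<in> {0..<n}. blk P j = blk P i}"
      then show "j \<in> blk P i" using blk_mem[OF P] by auto
    next
      fix j assume j: "j \<in> blk P i"
      then have "j \<in> {0..<n}" using blk_mem[OF P i] partition_onD1[OF P] by blast
      then show "j \<in> {j \<in> {0..<n}. blk P j = blk P i}"
        using blk_eq[OF P blk_mem(1)[OF P i] j] by simp
    qed
    finally show ?thesis .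
  qed
  have "part_of n (mkw n P g) = blk P ` {0..<n}"
    unfolding part_of_def using e by (auto simp: image_def)
  also have "\<dots> = P"
  proof
    show "P \<subseteq> blk P ` {0..<n}"
    proof
      fix X assume X: "X \<in> P"
      then obtain i where "i \<in> X" using partition_onD3[OF P] by (metis all_not_in_conv)
      then show "X \<in> blk P ` {0..<n}" using X blk_eq[OF P X] partition_onD1[OF P] by blast
    qed
    show "blk P ` {0..<n} \<subseteq> P" using blk_mem[OF P] by blast
  qed
  finally show "part_of n (mkw n P g) = P" .
qed

lemma mkw_inj:
  assumes P: "partition_on {0..<n} P"
  shows "inj_on (mkw n P) (P \<rightarrow>\<^sub>E F)"
proof (rule inj_onI)
  fix g h assume g: "g \<in> P \<rightarrow>\<^sub>E F" and h: "h \<in> P \<rightarrow>\<^sub>E F" and eq: "mkw n P g = mkw n P h"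
  have ge: "g \<in> extensional P" "h \<in> extensional P" using g h by (simp_all add: PiE_iff)
  show "g = h"
  proof (rule extensionalityI[OF ge])
    fix X assume X: "X \<in> P"
    then obtain i where i: "i \<in> X" using partition_onD3[OF P] by (metis all_not_in_conv)
    then have "i \<in> {0..<n}" using X partition_onD1[OF P] by blast
    then have "mkw n P g i = g X" "mkw n P h i = h X"
      using blk_eq[OF P X i] by (auto simp: mkw_def)
    then show "g X = h X" using eq by simp
  qed
qed

lemma card_inj_funcset:
  assumes "finite S" "finite T" "card S \<le> card T"
  shows "card {f \<in> S \<rightarrow>\<^sub>E T. inj_on f S} = fact (card T) div (fact (card T - card S))"
  using assms
proof (induct S arbitrary: T rule: finite_induct)
  case empty
  then show ?case
    by (simp add: Collect_conv_if PiE_empty_domain)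
next
  case (insert x S)
  have finite_delete: "finite {f \<in> S \<rightarrow>\<^sub>E (T - {x}). inj_on f S}" for x
    using \<open>finite T\<close> \<open>finite S\<close> by (intro finite_subset[OF _ finite_PiE[of S "\<lambda>_. T - {x}"]]) auto
  from insert have hyps: "\<forall>y \<in> T. card ({g. g \<in> S \<rightarrow>\<^sub>E (T - {y}) \<and> inj_on g S}) =
      fact (card T - 1) div fact ((card T - 1) - card S)"(is "\<forall> _ \<in> T. _ = ?k")
    by auto
  from extensional_funcset_extend_domain_inj_on_eq[OF \<open>x \<notin> S\<close>]
  have "card {f. f \<in> (insert x S) \<rightarrow>\<^sub>E T \<and> inj_on f (insert x S)} =
      card ((\<lambda>(y, g). g(x := y)) ` {(y, g). y \<in> T \<and> g \<in> S \<rightarrow>\<^sub>E (T - {y}) \<and> inj_on g S})"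
    by metis
  also from extensional_funcset_extend_domain_inj_onI[OF \<open>x \<notin> S\<close>, of T]
  have "\<dots> = card {(y, g). y \<in> T \<and> g \<in> S \<rightarrow>\<^sub>E (T - {y}) \<and> inj_on g S}"
    by (simp add: card_image)
  also have "card {(y, g). y \<in> T \<and> g \<in> S \<rightarrow>\<^sub>E (T - {y}) \<and> inj_on g S} =
      card (SIGMA y:T. {f \<in> S \<rightarrow>\<^sub>E (T - {y}). inj_on f S})"
    by (auto intro!: arg_cong[where f=card])
  also from \<open>finite T\<close> finite_delete
  have "\<dots> = (\<Sum>y \<in> T. card {g. g \<in> S \<rightarrow>\<^sub>E (T - {y}) \<and>  inj_on g S})"
    by (subst card_SigmaI) auto
  also from hyps have "\<dots> = (card T) * ?k"
    by auto
  also have "\<dots> = card T * fact (card T - 1) div fact (card T - card (insert x S))"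
    using insert unfolding div_mult1_eq[of "card T" "fact (card T - 1)"]
    by (simp add: fact_mod)
  also have "\<dots> = fact (card T) div fact (card T - card (insert x S))"
    using insert by (simp add: fact_reduce[of "card T"])
  finally show ?case by simp
qed



lemma arith_ff:
  fixes m b c :: nat
  assumes "c \<le> m" "b \<le> m" "1 \<le> b" "1 \<le> c"
  shows "m * fact (c - b) * ((m - b) choose (c - b)) * fact (m - c) \<le> (fact m :: nat)"
proof (cases "c \<le> b")
  case True
  then have "m * fact (c - b) * ((m - b) choose (c - b)) * fact (m - c) = m * fact (m - c)" by simp
  also have "\<dots> \<le> m * fact (m - 1)" using assms by (simp add: fact_mono)
  also have "\<dots> = fact m" using assms by (cases m) auto
  finally show ?thesis by simp
next
  case False
  have "fact (c - b) * fact ((m - b) - (c - b)) * ((m - b) choose (c - b)) = fact (m - b)"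
    using False assms by (intro binomial_fact_lemma) simp
  moreover have "(m - b) - (c - b) = m - c" using False assms by simp
  ultimately have "m * fact (c - b) * ((m - b) choose (c - b)) * fact (m - c) = m * fact (m - b)"
    by (simp add: algebra_simps)
  also have "\<dots> \<le> m * fact (m - 1)" using assms by (simp add: fact_mono)
  also have "\<dots> = fact m" using assms by (cases m) auto
  finally show ?thesis by simp
qed

lemma count_lb:
  assumes P: "partition_on {0..<n} y" and F: "F \<subseteq> {0..<k}" and B: "B \<subseteq> F" "card B = b" "1 \<le> b"
    and c: "card y = c" "1 \<le> c"
  shows "real (card F) * fact (c - b) * real ((card F - b) choose (c - b))
         \<le> real (card {w \<in> vecs k n. part_of n w = y \<and> (\<forall>i\<in>{0..<n}. w i \<in> F)})"
proof -
  define m where "m = card F"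
  have fF: "finite F" using F finite_subset by blast
  have bm: "b \<le> m" using B card_mono[OF fF] m_def by blast
  show ?thesis
  proof (cases "c \<le> m")
    case False
    then have "(card F - b) choose (c - b) = 0" using bm m_def False by (intro binomial_eq_0) linarith
    then show ?thesis by (simp only: of_nat_0 mult_zero_right of_nat_0_le_iff)
  next
    case True
    have fy: "finite y" using finite_elements[OF _ P] by simp
    have fO: "finite {w \<in> vecs k n. part_of n w = y \<and> (\<forall>i\<in>{0..<n}. w i \<in> F)}"
      by (rule finite_subset[of _ "vecs k n"]) (auto simp: vecs_def intro!: finite_PiE)
    have "mkw n y ` {g \<in> y \<rightarrow>\<^sub>E F. inj_on g y} \<subseteq> {w \<in> vecs k n. part_of n w = y \<and> (\<forall>i\<in>{0..<n}. w i \<in> F)}"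
      using mkw_props[OF P _ _ F] by (intro image_subsetI) simp
    moreover have "inj_on (mkw n y) {g \<in> y \<rightarrow>\<^sub>E F. inj_on g y}"
      by (rule inj_on_subset[OF mkw_inj[OF P]]) blast
    ultimately have le: "card {g \<in> y \<rightarrow>\<^sub>E F. inj_on g y} \<le> card {w \<in> vecs k n. part_of n w = y \<and> (\<forall>i\<in>{0..<n}. w i \<in> F)}"
      using fO by (meson card_inj_on_le)
    have ci: "card {g \<in> y \<rightarrow>\<^sub>E F. inj_on g y} = fact m div fact (m - c)"
      using card_inj_funcset[OF fy fF] True c m_def by simp
    have ar: "m * fact (c - b) * ((m - b) choose (c - b)) * fact (m - c) \<le> (fact m :: nat)"
      using arith_ff[OF True bm B(3) c(2)] .
    have "real m * fact (c - b) * real ((m - b) choose (c - b)) \<le> fact m / fact (m - c)"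
    proof -
      have "real (m * fact (c - b) * ((m - b) choose (c - b)) * fact (m - c)) \<le> real (fact m)"
        using ar by (simp only: of_nat_le_iff)
      then have "real m * fact (c - b) * real ((m - b) choose (c - b)) * fact (m - c) \<le> fact m"
        by simp
      then show ?thesis by (simp add: field_simps)
    qed
    also have "\<dots> = real (fact m div fact (m - c))"
      using real_of_nat_div[of "fact (m - c)" "fact m"] by (simp add: fact_dvd)
    also have "\<dots> \<le> real (card {w \<in> vecs k n. part_of n w = y \<and> (\<forall>i\<in>{0..<n}. w i \<in> F)})"
      using le ci by simp
    finally show ?thesis by (simp add: m_def)
  qed
qed



lemma prod_if_const:
  assumes "finite I"
  shows "(\<Prod>i\<in>I. (if P i then (a::real) else 0)) = (if \<forall>i\<in>I. P i then a ^ card I else 0)"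
proof (cases "\<forall>i\<in>I. P i")
  case True
  then have "(\<Prod>i\<in>I. (if P i then (a::real) else 0)) = (\<Prod>i\<in>I. a)" by (intro prod.cong) auto
  then show ?thesis using True by simp
next
  case False
  then obtain i where "i \<in> I" "\<not> P i" by blast
  then show ?thesis using False assms by (intro trans[OF prod_zero]) auto
qed

lemma exists_vec:
  assumes P: "partition_on {0..<n} P" and nk: "n \<le> k"
  shows "\<exists>u. u \<in> vecs k n \<and> part_of n u = P"
proof -
  have fP: "finite P" using finite_elements[OF _ P] by simp
  have "card P \<le> card {0..<k}" using card_part_le[OF P] nk by simp
  then obtain g where g: "g ` P \<subseteq> {0..<k}" "inj_on g P"
    using card_le_inj[OF fP] by blast
  have "restrict g P \<in> P \<rightarrow>\<^sub>E {0..<k}" "inj_on (restrict g P) P"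
    using g by (auto simp: inj_on_def)
  then show ?thesis using mkw_props[OF P _ _ order_refl] by blast
qed

lemma fix_card_ge:
  assumes "\<sigma> permutes S" "S \<subseteq> {0..<k} - B" "B \<subseteq> {0..<k}"
  shows "B \<subseteq> fixpts k \<sigma>" "card B \<le> card (fixpts k \<sigma>)"
proof -
  show "B \<subseteq> fixpts k \<sigma>" using assms permutes_not_in[OF assms(1)] by (auto simp: fixpts_def)
  then show "card B \<le> card (fixpts k \<sigma>)" by (intro card_mono) (auto simp: fixpts_def)
qed



theorem lemma5p1:
  fixes k n :: nat
  assumes "1 \<le> n" and "n \<le> k"
  shows "\<forall>x\<in>setparts n. \<forall>y\<in>setparts n.
           burnside_Kbar k n x y \<ge> 1 / real (n + 1) ^ (n - 1)"
proof (intro ballI)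
  fix x y assume x: "x \<in> setparts n" and y: "y \<in> setparts n"
  have Px: "partition_on {0..<n} x" and Py: "partition_on {0..<n} y"
    using x y by (auto simp: setparts_def)
  define u where "u = (SOME u. u \<in> vecs k n \<and> part_of n u = x)"
  have u: "u \<in> vecs k n"
    using someI_ex[OF exists_vec[OF Px assms(2)]] by (simp add: u_def)
  define A where "A = {0..<k}"
  define B where "B = u ` {0..<n}"
  define b where "b = card B"
  define S0 where "S0 = A - B"
  define G where "G = {\<sigma>. \<sigma> permutes S0}"
  define Ov where "Ov = {w \<in> vecs k n. part_of n w = y}"
  define c where "c = card y"
  define j where "j = c - b"
  define m where "m = (\<lambda>\<sigma>. card (fixpts k \<sigma>))"
  define Tset where "Tset = {T. T \<subseteq> S0 \<and> card T = j}"
  have fA: "finite A" by (simp add: A_def)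
  have BA: "B \<subseteq> A" using u by (auto simp: B_def A_def vecs_def PiE_iff)
  have b1: "1 \<le> b" using assms(1) by (simp add: b_def B_def card_gt_0_iff Suc_le_eq)
  have bn: "b \<le> n" using card_image_le[of "{0..<n}" u] by (simp add: b_def B_def)
  have cn: "c \<le> n" using card_part_le[OF Py] by (simp add: c_def)
  have c1: "1 \<le> c"
  proof -
    have "y \<noteq> {}" using partition_onD1[OF Py] assms(1) by auto
    then show ?thesis using finite_elements[OF _ Py] by (simp add: c_def card_gt_0_iff Suc_le_eq)
  qed
  have fB: "finite B" using finite_subset[OF BA fA] .
  have cardS0: "card S0 = k - b" using card_Diff_subset[OF fB BA] by (simp add: S0_def b_def A_def)
  have jS0: "j \<le> card S0" using cardS0 cn assms(2) by (simp add: j_def)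
  have bjn: "b + j \<le> n" using bn cn by (simp add: j_def)
  have fS0: "finite S0" using fA by (simp add: S0_def)
  have fG: "finite G" using fS0 by (simp add: G_def finite_permutations)
  have cardG: "card G = fact (k - b)" using card_permutations[OF cardS0 fS0] by (simp add: G_def)
  have stabG: "stab k n u = G"
  proof -
    have "stab k n u = {\<sigma>. \<sigma> permutes A \<and> (\<forall>b\<in>B. \<sigma> b = b)}"
      by (auto simp: stab_def A_def B_def)
    also have "\<dots> = G" using perm_fix_eq[OF BA] by (simp add: G_def S0_def)
    finally show ?thesis .
  qed
  have fOv: "finite Ov"
    by (rule finite_subset[of _ "vecs k n"]) (auto simp: Ov_def vecs_def intro!: finite_PiE)
  have mpos: "m \<sigma> \<ge> 1" and BF: "B \<subseteq> fixpts k \<sigma>" if "\<sigma> permutes S" "S \<subseteq> S0" for \<sigma> S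
    using fix_card_ge[OF that(1) _ BA[unfolded A_def]] that b1 by (auto simp: m_def b_def S0_def A_def)
  have FA: "fixpts k \<sigma> \<subseteq> A" for \<sigma> by (auto simp: fixpts_def A_def)

  have K: "burnside_K k n u w = (\<Sum>\<sigma>\<in>G. (1 / real (card G)) *
             (if \<forall>i\<in>{0..<n}. w i \<in> fixpts k \<sigma> then 1 / real (m \<sigma>) ^ n else 0))" for w
    unfolding burnside_K_def stabG
    by (intro sum.cong refl) (simp add: prod_if_const m_def power_one_over)
  have "burnside_Kbar k n x y = (\<Sum>w\<in>Ov. burnside_K k n u w)"
    by (simp add: burnside_Kbar_def Let_def u_def[symmetric] Ov_def)
  also have "\<dots> = (\<Sum>\<sigma>\<in>G. \<Sum>w\<in>Ov. (1 / real (card G)) *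
             (if \<forall>i\<in>{0..<n}. w i \<in> fixpts k \<sigma> then 1 / real (m \<sigma>) ^ n else 0))"
    unfolding K by (rule sum.swap)
  also have "\<dots> = (\<Sum>\<sigma>\<in>G. (1 / real (card G)) *
             (real (card {w\<in>Ov. \<forall>i\<in>{0..<n}. w i \<in> fixpts k \<sigma>}) / real (m \<sigma>) ^ n))"
  proof (intro sum.cong refl)
    fix \<sigma>
    have "(\<Sum>w\<in>Ov. (if \<forall>i\<in>{0..<n}. w i \<in> fixpts k \<sigma> then 1 / real (m \<sigma>) ^ n else 0))
        = (\<Sum>w\<in>{w\<in>Ov. \<forall>i\<in>{0..<n}. w i \<in> fixpts k \<sigma>}. 1 / real (m \<sigma>) ^ n)"
      by (rule sum.inter_filter[OF fOv, symmetric])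
    also have "\<dots> = real (card {w\<in>Ov. \<forall>i\<in>{0..<n}. w i \<in> fixpts k \<sigma>}) / real (m \<sigma>) ^ n"
      by simp
    finally show "(\<Sum>w\<in>Ov. (1 / real (card G)) *
             (if \<forall>i\<in>{0..<n}. w i \<in> fixpts k \<sigma> then 1 / real (m \<sigma>) ^ n else 0))
        = (1 / real (card G)) *
             (real (card {w\<in>Ov. \<forall>i\<in>{0..<n}. w i \<in> fixpts k \<sigma>}) / real (m \<sigma>) ^ n)"
      by (simp only: sum_distrib_left[symmetric])
  qed
  finally have Kb: "burnside_Kbar k n x y = (1 / real (card G)) * (\<Sum>\<sigma>\<in>G.
             real (card {w\<in>Ov. \<forall>i\<in>{0..<n}. w i \<in> fixpts k \<sigma>}) / real (m \<sigma>) ^ n)"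
    by (simp add: sum_distrib_left)

  define h where "h = (\<lambda>\<sigma>. 1 / real (m \<sigma>) ^ (n - 1))"
  have st2: "fact j * (real (card {T\<in>Tset. T \<subseteq> fixpts k \<sigma>}) * h \<sigma>)
      \<le> real (card {w\<in>Ov. \<forall>i\<in>{0..<n}. w i \<in> fixpts k \<sigma>}) / real (m \<sigma>) ^ n" if s: "\<sigma> \<in> G" for \<sigma>
  proof -
    have sp: "\<sigma> permutes S0" using s by (simp add: G_def)
    have m1: "m \<sigma> \<ge> 1" using mpos[OF sp order_refl] .
    have BF': "B \<subseteq> fixpts k \<sigma>" using BF[OF sp order_refl] .
    have fF: "finite (fixpts k \<sigma>)" by (simp add: fixpts_def)
    have "{T\<in>Tset. T \<subseteq> fixpts k \<sigma>} = {T. T \<subseteq> fixpts k \<sigma> - B \<and> card T = j}"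
      using FA[of \<sigma>] by (auto simp: Tset_def S0_def)
    then have ct: "card {T\<in>Tset. T \<subseteq> fixpts k \<sigma>} = (m \<sigma> - b) choose j"
      using n_subsets[of "fixpts k \<sigma> - B" j] fF BF' by (simp add: card_Diff_subset m_def b_def finite_subset)
    have cl: "real (m \<sigma>) * fact j * real ((m \<sigma> - b) choose j)
         \<le> real (card {w\<in>Ov. \<forall>i\<in>{0..<n}. w i \<in> fixpts k \<sigma>})"
      using count_lb[OF Py FA[of \<sigma>, unfolded A_def] BF' b_def[symmetric] b1 c_def[symmetric] c1] by (simp add: Ov_def m_def j_def c_def fixpts_def conj_assoc)
    have "fact j * (real (card {T\<in>Tset. T \<subseteq> fixpts k \<sigma>}) * h \<sigma>)
        = real (m \<sigma>) * fact j * real ((m \<sigma> - b) choose j) / real (m \<sigma>) ^ n"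
      using m1 assms(1) by (simp add: ct h_def power_eq_if[of "real (m \<sigma>)" n])
    also have "\<dots> \<le> real (card {w\<in>Ov. \<forall>i\<in>{0..<n}. w i \<in> fixpts k \<sigma>}) / real (m \<sigma>) ^ n"
      using cl m1 by (intro divide_right_mono) auto
    finally show ?thesis .
  qed

  have fT: "finite Tset" using fS0 by (simp add: Tset_def)
  have perm_eq: "{\<sigma>\<in>G. T \<subseteq> fixpts k \<sigma>} = {\<sigma>. \<sigma> permutes (S0 - T)}" if T: "T \<in> Tset" for T
  proof -
    have TS: "T \<subseteq> S0" using T by (simp add: Tset_def)
    have "{\<sigma>\<in>G. T \<subseteq> fixpts k \<sigma>} = {\<sigma>. \<sigma> permutes S0 \<and> (\<forall>t\<in>T. \<sigma> t = t)}"
      using TS by (auto simp: G_def fixpts_def S0_def A_def)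
    then show ?thesis using perm_fix_eq[OF TS] by simp
  qed
  have st3: "(\<Sum>\<sigma>\<in>G. real (card {T\<in>Tset. T \<subseteq> fixpts k \<sigma>}) * h \<sigma>)
       = (\<Sum>T\<in>Tset. \<Sum>\<sigma>\<in>{\<sigma>. \<sigma> permutes (S0 - T)}. h \<sigma>)"
  proof -
    have "(\<Sum>\<sigma>\<in>G. real (card {T\<in>Tset. T \<subseteq> fixpts k \<sigma>}) * h \<sigma>)
        = (\<Sum>\<sigma>\<in>G. \<Sum>T\<in>{T\<in>Tset. T \<subseteq> fixpts k \<sigma>}. h \<sigma>)" by simp
    also have "\<dots> = (\<Sum>T\<in>Tset. \<Sum>\<sigma>\<in>{\<sigma>\<in>G. T \<subseteq> fixpts k \<sigma>}. h \<sigma>)"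
      by (rule sum.swap_restrict[OF fG fT])
    also have "\<dots> = (\<Sum>T\<in>Tset. \<Sum>\<sigma>\<in>{\<sigma>. \<sigma> permutes (S0 - T)}. h \<sigma>)"
      using perm_eq by (intro sum.cong refl) simp
    finally show ?thesis .
  qed

  have st4: "fact (k - b - j) / real (b + j + 1) ^ (n - 1) \<le> (\<Sum>\<sigma>\<in>{\<sigma>. \<sigma> permutes (S0 - T)}. h \<sigma>)"
    if T: "T \<in> Tset" for T
  proof -
    have TS: "T \<subseteq> S0" and cT: "card T = j" using T by (auto simp: Tset_def)
    have fT': "finite T" using TS fS0 finite_subset by blast
    have cS: "card (S0 - T) = k - b - j" using TS cT cardS0 fT' by (simp add: card_Diff_subset)
    have SA: "S0 - T \<subseteq> A" by (auto simp: S0_def)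
    have fI: "finite {\<sigma>. \<sigma> permutes (S0 - T)}" using fS0 by (simp add: finite_permutations)
    have cI: "card {\<sigma>. \<sigma> permutes (S0 - T)} = fact (k - b - j)"
      using card_permutations[OF cS] fS0 by simp
    have fs: "(\<Sum>\<sigma>\<in>{\<sigma>. \<sigma> permutes (S0 - T)}. card {a\<in>A. \<sigma> a = a}) \<le> (card A - card (S0 - T) + 1) * fact (card (S0 - T))"
      by (rule fixsum[OF fA SA])
    have "card A - card (S0 - T) + 1 = b + j + 1"
      using cS jS0 cardS0 bn assms(2) by (simp add: A_def)
    then have fs': "(\<Sum>\<sigma>\<in>{\<sigma>. \<sigma> permutes (S0 - T)}. real (m \<sigma>)) \<le> real (card {\<sigma>. \<sigma> permutes (S0 - T)}) * real (b + j + 1)"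
    proof -
      assume e: "card A - card (S0 - T) + 1 = b + j + 1"
      have "(\<Sum>\<sigma>\<in>{\<sigma>. \<sigma> permutes (S0 - T)}. m \<sigma>) \<le> (b + j + 1) * fact (k - b - j)"
        using fs e cS by (simp add: m_def fixpts_def A_def)
      then have "real (\<Sum>\<sigma>\<in>{\<sigma>. \<sigma> permutes (S0 - T)}. m \<sigma>) \<le> real ((b + j + 1) * fact (k - b - j))"
        by (simp only: of_nat_le_iff)
      then show ?thesis using cI by (simp add: algebra_simps)
    qed
    have "real (card {\<sigma>. \<sigma> permutes (S0 - T)}) / real (b + j + 1) ^ (n - 1) \<le> (\<Sum>\<sigma>\<in>{\<sigma>. \<sigma> permutes (S0 - T)}. 1 / real (m \<sigma>) ^ (n - 1))"
      by (rule jensen_inv[OF fI _ fs']) (use mpos[of _ "S0 - T"] in force)+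
    then show ?thesis using cI by (simp add: h_def)
  qed

  have "burnside_Kbar k n x y \<ge> (1 / real (card G)) * (\<Sum>\<sigma>\<in>G. fact j * (real (card {T\<in>Tset. T \<subseteq> fixpts k \<sigma>}) * h \<sigma>))"
    unfolding Kb by (intro mult_left_mono sum_mono st2) auto
  also have "(\<Sum>\<sigma>\<in>G. fact j * (real (card {T\<in>Tset. T \<subseteq> fixpts k \<sigma>}) * h \<sigma>))
      = fact j * (\<Sum>T\<in>Tset. \<Sum>\<sigma>\<in>{\<sigma>. \<sigma> permutes (S0 - T)}. h \<sigma>)"
    by (simp add: sum_distrib_left[symmetric] st3)
  finally have L: "burnside_Kbar k n x y \<ge> (1 / real (card G)) * (fact j * (\<Sum>T\<in>Tset. \<Sum>\<sigma>\<in>{\<sigma>. \<sigma> permutes (S0 - T)}. h \<sigma>))" .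
  have "(\<Sum>T\<in>Tset. fact (k - b - j) / real (b + j + 1) ^ (n - 1)) \<le> (\<Sum>T\<in>Tset. \<Sum>\<sigma>\<in>{\<sigma>. \<sigma> permutes (S0 - T)}. h \<sigma>)"
    by (intro sum_mono st4)
  moreover have "card Tset = (k - b) choose j"
    using n_subsets[OF fS0, of j] cardS0 by (simp add: Tset_def)
  ultimately have L2: "real ((k - b) choose j) * (fact (k - b - j) / real (b + j + 1) ^ (n - 1)) \<le> (\<Sum>T\<in>Tset. \<Sum>\<sigma>\<in>{\<sigma>. \<sigma> permutes (S0 - T)}. h \<sigma>)"
    by simp
  have bf: "fact j * fact (k - b - j) * ((k - b) choose j) = (fact (k - b) :: nat)"
    using binomial_fact_lemma[of j "k - b"] jS0 cardS0 by simp
  then have bf': "fact j * fact (k - b - j) * real ((k - b) choose j) = fact (k - b)"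
    by (metis of_nat_fact of_nat_mult)
  have "1 / real (b + j + 1) ^ (n - 1) = (1 / real (card G)) * (fact j * (real ((k - b) choose j) * (fact (k - b - j) / real (b + j + 1) ^ (n - 1))))"
    using bf' cardG by (simp add: field_simps)
  also have "\<dots> \<le> (1 / real (card G)) * (fact j * (\<Sum>T\<in>Tset. \<Sum>\<sigma>\<in>{\<sigma>. \<sigma> permutes (S0 - T)}. h \<sigma>))"
    using L2 by (intro mult_left_mono) auto
  also have "\<dots> \<le> burnside_Kbar k n x y" using L .
  finally have "1 / real (b + j + 1) ^ (n - 1) \<le> burnside_Kbar k n x y" .
  moreover have "1 / real (n + 1) ^ (n - 1) \<le> 1 / real (b + j + 1) ^ (n - 1)"
    using bjn by (intro divide_left_mono power_mono) auto
  ultimately show "burnside_Kbar k n x y \<ge> 1 / real (n + 1) ^ (n - 1)" by linarith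
qed


end
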